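(* Let $m\geq 1$ and let $H_n$ be a $(2m+1)$-historic tree on $n$ vertices having $b\geq 1$ branchings (so it has $b+1$ external vertices). For $i=1,\dots,b+1$ let $s_i$ be the number of internal vertices of $H_n$ strictly between the $i$-th external vertex (from the left) and the closest branching above it. Let $\underline{\pi}(H_n)$ be the set of permutations $\pi\in S_n$ such that inserting the keys $\pi(1),\pi(2),\dots,\pi(n)$ successively, starting from the tree whose single node contains $\pi(1)$, yields the history $\Phi^{-1}(H_n)$. Then \[ |\underline{\pi}(H_n)|=\left(\frac{(2m+1)!}{(m!)^2}\right)^b\prod_{i=1}^{b+1}(m+s_i)!. \]
   Context: Fix $m\geq 1$. A $B$-tree of order $2m+1$ is a rooted plane search tree whose nodes contain pairwise distinct keys in increasing left-to-right order (a non-leaf node with $k$ keys has $k+1$ children, the $i$-th child's subtree containing keys between the $(i-1)$-th and $i$-th key), every non-root node has between $m$ and $2m$ keys, the root between $1$ and $2m$, and all leaves have equal depth. Insertion: place the new key in the appropriate leaf; whenever a node has $2m+1$ keys, split it, moving the median key up into the parent and forming two nodes of the $m$ smallest and $m$ largest keys (creating a new root with one key if the root splits). $B$-trees are considered up to isomorphism of rooted plane trees, leaves numbered left to right. A history is a sequence $(T_1,\dots,T_n)$ with $T_1$ a single node with one key and each $T_i$ obtained from $T_{i-1}$ by inserting one key. A $(2m+1)$-historic tree on $n$ vertices is a rooted plane tree with vertices labelled bijectively by $\{1,\dots,n\}$, labels increasing along every root-to-leaf path, where (root at height $0$) vertices at heights $2m+j(m+1)$, $j\geq 0$, called branchings,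 have two ordered child slots (left, right), each possibly occupied, and all other vertices have a single child slot. Tree vertices are internal; unoccupied slots are external vertices, ordered left to right. $\Phi$ is the bijection from histories to historic trees defined recursively by: $\Phi(T_1)$ is the one-vertex tree; if $T_{k+1}$ arises from $T_k$ by inserting a key into the $i$-th leaf of $T_k$ (before splits), then $\Phi(T_1,\dots,T_{k+1})$ is $\Phi(T_1,\dots,T_k)$ with a vertex labelled $k+1$ placed at its $i$-th external vertex. *)

theory Defs
  imports Complex_Main "HOL-Combinatorics.Permutations"
begin

text \<open>A B-tree node: list of keys (increasing) and list of children
  (empty for leaves, otherwise one more child than keys).\<close>
datatype btree = BT "nat list" "btree list"

text \<open>Result of inserting into a subtree: either it fits, or the subtree
  splits into a left node, a median key moved up, and a right node.\<close>
datatype bup = Fit btree | Split btree nat btree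

definition node_of :: "nat \<Rightarrow> nat list \<Rightarrow> btree list \<Rightarrow> bup" where
  "node_of m ks ts =
     (if length ks = 2*m+1
      then Split (BT (take m ks) (take (m+1) ts)) (ks ! m) (BT (drop (m+1) ks) (drop (m+1) ts))
      else Fit (BT ks ts))"

fun merge_up :: "bup \<Rightarrow> nat list \<Rightarrow> btree list \<Rightarrow> nat list \<times> btree list" where
  "merge_up (Fit t) ks ts = (ks, t # ts)"
| "merge_up (Split l k r) ks ts = (k # ks, l # r # ts)"

fun ins :: "nat \<Rightarrow> nat \<Rightarrow> btree \<Rightarrow> bup"
and ins_l :: "nat \<Rightarrow> nat \<Rightarrow> nat list \<Rightarrow> btree list \<Rightarrow> nat list \<times> btree list" where
  "ins m x (BT ks ts) =
     (if ts = [] then node_of m (insort x ks) []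
      else (case ins_l m x ks ts of (ks', ts') \<Rightarrow> node_of m ks' ts'))"
| "ins_l m x (k # ks) (t # ts) =
     (if x < k then merge_up (ins m x t) (k # ks) ts
      else (case ins_l m x ks ts of (ks', ts') \<Rightarrow> (k # ks', t # ts')))"
| "ins_l m x [] (t # ts) = merge_up (ins m x t) [] ts"
| "ins_l m x ks [] = (ks, [])"

definition btree_insert :: "nat \<Rightarrow> nat \<Rightarrow> btree \<Rightarrow> btree" where
  "btree_insert m x t = (case ins m x t of Fit t' \<Rightarrow> t' | Split l k r \<Rightarrow> BT [k] [l, r])"

fun nleaves :: "btree \<Rightarrow> nat" where
  "nleaves (BT ks ts) = (if ts = [] then 1 else sum_list (map nleaves ts))"

text \<open>Index (0-based, left to right) of the leaf of t into which the key x
  is placed by insertion (before splits).\<close>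
fun leafidx :: "nat \<Rightarrow> btree \<Rightarrow> nat"
and leafidx_l :: "nat \<Rightarrow> nat list \<Rightarrow> btree list \<Rightarrow> nat" where
  "leafidx x (BT ks ts) = (if ts = [] then 0 else leafidx_l x ks ts)"
| "leafidx_l x (k # ks) (t # ts) =
     (if x < k then leafidx x t else nleaves t + leafidx_l x ks ts)"
| "leafidx_l x [] (t # ts) = leafidx x t"
| "leafidx_l x ks [] = 0"

fun insert_leaves :: "nat \<Rightarrow> btree \<Rightarrow> nat list \<Rightarrow> nat list" where
  "insert_leaves m t [] = []"
| "insert_leaves m t (x # xs) = leafidx x t # insert_leaves m (btree_insert m x t) xs"

text \<open>Rooted plane trees whose child slots are explicit: Ext is an
  unoccupied slot (external vertex), Vtx a ts an internal vertex with label a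
  and child slots ts.\<close>
datatype htree = Ext | Vtx nat "htree list"

definition branching_height :: "nat \<Rightarrow> nat \<Rightarrow> bool" where
  "branching_height m h \<longleftrightarrow> (\<exists>j. h = 2*m + j*(m+1))"

definition slots :: "nat \<Rightarrow> nat \<Rightarrow> nat" where
  "slots m h = (if branching_height m h then 2 else 1)"

fun labels :: "htree \<Rightarrow> nat list" where
  "labels Ext = []"
| "labels (Vtx a ts) = a # concat (map labels ts)"

fun root_label :: "htree \<Rightarrow> nat option" where
  "root_label Ext = None"
| "root_label (Vtx a ts) = Some a"

text \<open>Shape condition (number of child slots per height) and labels
  increasing from parent to child; h is the height of the given subtree.\<close>
fun hwf :: "nat \<Rightarrow> nat \<Rightarrow> htree \<Rightarrow> bool" where
  "hwf m h Ext = True"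
| "hwf m h (Vtx a ts) =
     (length ts = slots m h \<and>
      list_all (\<lambda>t. hwf m (Suc h) t \<and> (case root_label t of None \<Rightarrow> True | Some b \<Rightarrow> a < b)) ts)"

definition historic :: "nat \<Rightarrow> nat \<Rightarrow> htree \<Rightarrow> bool" where
  "historic m n H \<longleftrightarrow> H \<noteq> Ext \<and> hwf m 0 H \<and> distinct (labels H) \<and> set (labels H) = {1..n}"

fun branchings :: "nat \<Rightarrow> nat \<Rightarrow> htree \<Rightarrow> nat" where
  "branchings m h Ext = 0"
| "branchings m h (Vtx a ts) =
     (if branching_height m h then 1 else 0) + sum_list (map (branchings m (Suc h)) ts)"

fun nexts :: "htree \<Rightarrow> nat" where
  "nexts Ext = 1"
| "nexts (Vtx a ts) = sum_list (map nexts ts)"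

text \<open>For each external vertex (left to right), the number of internal
  vertices strictly between it and the closest branching above it.
  c counts internal vertices strictly below the last branching seen.\<close>
fun ext_gaps :: "nat \<Rightarrow> nat \<Rightarrow> nat \<Rightarrow> htree \<Rightarrow> nat list" where
  "ext_gaps m h c Ext = [c]"
| "ext_gaps m h c (Vtx a ts) =
     concat (map (ext_gaps m (Suc h) (if branching_height m h then 0 else Suc c)) ts)"

definition new_vertex :: "nat \<Rightarrow> nat \<Rightarrow> nat \<Rightarrow> htree" where
  "new_vertex m h l = Vtx l (replicate (slots m h) Ext)"

text \<open>Place a vertex labelled l at the i-th (0-based) external vertex.\<close>
fun place :: "nat \<Rightarrow> nat \<Rightarrow> nat \<Rightarrow> nat \<Rightarrow> htree \<Rightarrow> htree"
and place_l :: "nat \<Rightarrow> nat \<Rightarrow> nat \<Rightarrow> nat \<Rightarrow> htree list \<Rightarrow> htree list" where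
  "place m h l i Ext = (if i = 0 then new_vertex m h l else Ext)"
| "place m h l i (Vtx a ts) = Vtx a (place_l m (Suc h) l i ts)"
| "place_l m h l i [] = []"
| "place_l m h l i (t # ts) =
     (if i < nexts t then place m h l i t # ts else t # place_l m h l (i - nexts t) ts)"

fun build :: "nat \<Rightarrow> nat \<Rightarrow> htree \<Rightarrow> nat list \<Rightarrow> htree" where
  "build m k T [] = T"
| "build m k T (i # is) = build m (Suc k) (place m 0 k i T) is"

text \<open>Phi applied to the history obtained by inserting the keys xs
  successively (first key forms the one-key root): vertex k+1 is placed at
  the external vertex with the index of the leaf receiving the (k+1)-st key.\<close>
fun Phi_keys :: "nat \<Rightarrow> nat list \<Rightarrow> htree" where
  "Phi_keys m [] = Ext"
| "Phi_keys m (x # xs) = build m 2 (new_vertex m 0 1) (insert_leaves m (BT [x] []) xs)"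

end

theory Submission
  imports Defs
begin


fun io :: "btree \<Rightarrow> nat list" and io_l :: "nat list \<Rightarrow> btree list \<Rightarrow> nat list" where
  "io (BT ks ts) = (if ts = [] then ks else io_l ks ts)"
| "io_l (k # ks) (t # ts) = io t @ k # io_l ks ts"
| "io_l [] (t # ts) = io t"
| "io_l ks [] = []"

fun sz :: "btree \<Rightarrow> nat list" where
  "sz (BT ks ts) = (if ts = [] then [length ks] else concat (map sz ts))"

fun wf :: "btree \<Rightarrow> bool" where
  "wf (BT ks ts) = (ts = [] \<or> (length ts = Suc (length ks) \<and> list_all wf ts))"

fun io_up :: "bup \<Rightarrow> nat list" where
  "io_up (Fit t) = io t" | "io_up (Split l k r) = io l @ k # io r"
fun sz_up :: "bup \<Rightarrow> nat list" where
  "sz_up (Fit t) = sz t" | "sz_up (Split l k r) = sz l @ sz r"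
fun wf_up :: "bup \<Rightarrow> bool" where
  "wf_up (Fit t) = wf t" | "wf_up (Split l k r) = (wf l \<and> wf r)"

definition upd :: "nat \<Rightarrow> nat \<Rightarrow> nat list \<Rightarrow> nat list" where
  "upd m i L = take i L @ (if L ! i = 2*m then [m, m] else [Suc (L ! i)]) @ drop (Suc i) L"

lemma upd_append1: "i < length A \<Longrightarrow> upd m i (A @ B) = upd m i A @ B"
  by (simp add: upd_def nth_append)

lemma upd_append2: "length A \<le> i \<Longrightarrow> upd m i (A @ B) = A @ upd m (i - length A) B"
  by (simp add: upd_def nth_append Suc_diff_le)

lemma nleaves_sz: "nleaves t = length (sz t)"
  by (induction t rule: sz.induct) (auto simp: length_concat intro!: arg_cong[where f=sum_list])

lemma io_l_cons: "io_l ks (t # ts) = io t @ (case ks of [] \<Rightarrow> [] | k # ks' \<Rightarrow> k # io_l ks' ts)"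
  by (cases ks) auto




lemma insort_app_less: "\<forall>b\<in>set B. x < b \<Longrightarrow> insort x (A @ B) = insort x A @ B"
  by (induction A) (auto, cases B, auto)

lemma insort_app_gt: "\<forall>a\<in>set A. a < x \<Longrightarrow> insort x (A @ B) = A @ insort x B"
  by (induction A) auto

lemma io_split:
  "length ts = Suc (length ks) \<Longrightarrow> j < length ks \<Longrightarrow>
   io_l (take j ks) (take (Suc j) ts) @ ks ! j # io_l (drop (Suc j) ks) (drop (Suc j) ts) = io_l ks ts"
proof (induction ks arbitrary: j ts)
  case Nil then show ?case by simp
next
  case (Cons k ks)
  then obtain t ts' where ts: "ts = t # ts'" by (cases ts) auto
  show ?case
  proof (cases j)
    case 0 then show ?thesis using Cons.prems ts by (cases ts') (auto simp: io_l_cons)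
  next
    case (Suc j')
    then have "j' < length ks" using Cons.prems by simp
    then have "ks \<noteq> []" by auto
    then obtain ts'' t' where "ts' = t' # ts''" using Cons.prems ts by (cases ts') auto
    then show ?thesis using Cons.IH[of ts' j'] Cons.prems ts Suc
      by (cases ks) (auto simp: io_l_cons split: list.splits)
  qed
qed

lemma leafidx_lt:
  "wf t \<Longrightarrow> leafidx x t < length (sz t)"
  "length ts = Suc (length ks) \<Longrightarrow> list_all wf ts \<Longrightarrow> leafidx_l x ks ts < length (concat (map sz ts))"
proof (induction x t and x ks ts rule: leafidx_leafidx_l.induct)
  case (2 x k ks t ts)
  then show ?case by (auto simp: nleaves_sz)
qed auto

lemma sorted_io_l_cons:
  "sorted_wrt (<) (io_l (k # ks) (t # ts)) \<Longrightarrow>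
   (\<forall>a\<in>set (io t). a < k) \<and> (\<forall>b\<in>set (io_l ks ts). k < b) \<and> sorted_wrt (<) (io t) \<and> sorted_wrt (<) (io_l ks ts)"
  by (auto simp: sorted_wrt_append)

lemma ins_main:
  "wf t \<Longrightarrow> sorted_wrt (<) (io t) \<Longrightarrow> x \<notin> set (io t) \<Longrightarrow>
    wf_up (ins m x t) \<and> io_up (ins m x t) = insort x (io t) \<and> sz_up (ins m x t) = upd m (leafidx x t) (sz t)"
  "length ts = Suc (length ks) \<Longrightarrow> list_all wf ts \<Longrightarrow> sorted_wrt (<) (io_l ks ts) \<Longrightarrow> x \<notin> set (io_l ks ts) \<Longrightarrow>
    (case ins_l m x ks ts of (ks', ts') \<Rightarrow> length ts' = Suc (length ks') \<and> list_all wf ts' \<and>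
       io_l ks' ts' = insort x (io_l ks ts) \<and> concat (map sz ts') = upd m (leafidx_l x ks ts) (concat (map sz ts)))"
proof (induction m x t and m x ks ts rule: ins_ins_l.induct)
  case (1 m x ks ts)
  show ?case
  proof (cases "ts = []")
    case True
    define L where "L = insort x ks"
    have lenL: "length L = Suc (length ks)" by (simp add: L_def)
    show ?thesis
    proof (cases "length L = 2*m+1")
      case True
      have "m < length L" using True by simp
      then have "take m L @ L ! m # drop (Suc m) L = L" by (simp add: id_take_nth_drop[symmetric])
      then show ?thesis using True \<open>ts = []\<close> lenL
        by (simp add: node_of_def L_def[symmetric] upd_def)
    next
      case False
      then show ?thesis using \<open>ts = []\<close> lenL
        by (simp add: node_of_def L_def[symmetric] upd_def)
    qed
  next
    case False
    with "1.prems" have len: "length ts = Suc (length ks)" and wfs: "list_all wf ts" by auto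
    obtain ks' ts' where ilr: "ins_l m x ks ts = (ks', ts')" by fastforce
    from "1.IH"[OF False len wfs] "1.prems" False ilr
    have h: "length ts' = Suc (length ks')" "list_all wf ts'" "io_l ks' ts' = insort x (io_l ks ts)"
       "concat (map sz ts') = upd m (leafidx_l x ks ts) (concat (map sz ts))" by auto
    have ts'ne: "ts' \<noteq> []" using h(1) by auto
    show ?thesis
    proof (cases "length ks' = 2*m+1")
      case True
      have m1: "take (Suc m) ts' \<noteq> []" "drop (Suc m) ts' \<noteq> []" using True h(1) by auto
      have "io_l (take m ks') (take (Suc m) ts') @ ks' ! m # io_l (drop (Suc m) ks') (drop (Suc m) ts') = io_l ks' ts'"
        using io_split[OF h(1), of m] True by simp
      moreover have "concat (map sz (take (Suc m) ts')) @ concat (map sz (drop (Suc m) ts')) = concat (map sz ts')"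
        by (metis append_take_drop_id concat_append map_append)
      moreover have "list_all wf (take (Suc m) ts')" "list_all wf (drop (Suc m) ts')"
        using h(2) by (auto simp: list_all_iff dest: in_set_takeD in_set_dropD)
      ultimately show ?thesis using True h m1 False ilr "1.prems"
        by (simp add: node_of_def)
    next
      case False
      then show ?thesis using h ts'ne \<open>ts \<noteq> []\<close> ilr "1.prems"
        by (simp add: node_of_def)
    qed
  qed
next
  case (2 m x k ks t ts)
  have len: "length ts = Suc (length ks)" using "2.prems" by simp
  have wft: "wf t" "list_all wf ts" using "2.prems" by auto
  note so = sorted_io_l_cons[OF "2.prems"(3)]
  have xnot: "x \<notin> set (io t)" "x \<noteq> k" "x \<notin> set (io_l ks ts)" using "2.prems"(4) by auto
  show ?case
  proof (cases "x < k")
    case True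
    have IH: "wf_up (ins m x t) \<and> io_up (ins m x t) = insort x (io t) \<and> sz_up (ins m x t) = upd m (leafidx x t) (sz t)"
      using "2.IH"(1)[OF True wft(1)] so xnot by blast
    have gt: "\<forall>b\<in>set (k # io_l ks ts). x < b" using True so by auto
    have ins_eq: "insort x (io_l (k # ks) (t # ts)) = insort x (io t) @ k # io_l ks ts"
      using insort_app_less[OF gt, of "io t"] by simp
    have li: "leafidx x t < length (sz t)" using leafidx_lt(1)[OF wft(1)] .
    show ?thesis
    proof (cases "ins m x t")
      case (Fit t')
      then show ?thesis using IH True len wft ins_eq li
        by (simp add: upd_append1)
    next
      case (Split l k' r)
      then show ?thesis using IH True len wft ins_eq li
        by (simp add: upd_append1 io_l_cons)
    qed
  next
    case False
    then have xk: "k < x" using xnot by auto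
    obtain ks' ts' where ilr: "ins_l m x ks ts = (ks', ts')" by fastforce
    have IH: "length ts' = Suc (length ks') \<and> list_all wf ts' \<and>
       io_l ks' ts' = insort x (io_l ks ts) \<and> concat (map sz ts') = upd m (leafidx_l x ks ts) (concat (map sz ts))"
      using "2.IH"(2)[OF False len wft(2)] so xnot ilr by auto
    have lt: "\<forall>a\<in>set (io t @ [k]). a < x" using xk so by auto
    have ins_eq: "insort x (io_l (k # ks) (t # ts)) = io t @ k # insort x (io_l ks ts)"
      using insort_app_gt[OF lt, of "io_l ks ts"] by simp
    show ?thesis using IH False ilr ins_eq wft
      by (simp add: upd_append2 nleaves_sz)
  qed
next
  case (3 m x t ts)
  then have ts: "ts = []" by simp
  have wft: "wf t" using 3 by simp
  have IH: "wf_up (ins m x t) \<and> io_up (ins m x t) = insort x (io t) \<and> sz_up (ins m x t) = upd m (leafidx x t) (sz t)"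
    using "3.IH"[OF wft] "3.prems" by simp
  show ?case using IH ts wft by (cases "ins m x t") auto
next
  case (4 m x ks)
  then show ?case by simp
qed

lemma btree_insert_main:
  "wf t \<Longrightarrow> sorted_wrt (<) (io t) \<Longrightarrow> x \<notin> set (io t) \<Longrightarrow>
   wf (btree_insert m x t) \<and> io (btree_insert m x t) = insort x (io t) \<and> sz (btree_insert m x t) = upd m (leafidx x t) (sz t)"
  using ins_main(1)[of t x m] by (cases "ins m x t") (auto simp: btree_insert_def)



fun gi :: "nat list \<Rightarrow> nat \<Rightarrow> nat" where
  "gi [] r = 0"
| "gi (a # L) r = (if r \<le> a then 0 else Suc (gi L (r - Suc a)))"

lemma gi_append1: "r < sum_list (map Suc A) \<Longrightarrow> gi (A @ B) r = gi A r"
  by (induction A arbitrary: r) auto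

lemma gi_append2: "sum_list (map Suc A) \<le> r \<Longrightarrow> gi (A @ B) r = length A + gi B (r - sum_list (map Suc A))"
  by (induction A arbitrary: r) (auto simp: diff_diff_add)

lemma io_len:
  "wf t \<Longrightarrow> Suc (length (io t)) = sum_list (map Suc (sz t))"
  "length ts = Suc (length ks) \<Longrightarrow> list_all wf ts \<Longrightarrow> Suc (length (io_l ks ts)) = sum_list (map Suc (concat (map sz ts)))"
proof (induction t and ks ts rule: io_io_l.induct)
  case (1 ks ts)
  then show ?case by auto
next
  case (2 k ks t ts)
  then show ?case by auto
next
  case (3 t ts)
  then show ?case by auto
qed auto

lemma concat_map_cons_sz: "concat (map sz (t # ts)) = sz t @ concat (map sz ts)" by simp

lemma leafidx_gi:
  "wf t \<Longrightarrow> sorted_wrt (<) (io t) \<Longrightarrow> x \<notin> set (io t) \<Longrightarrow>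
     leafidx x t = gi (sz t) (length (filter (\<lambda>y. y < x) (io t)))"
  "length ts = Suc (length ks) \<Longrightarrow> list_all wf ts \<Longrightarrow> sorted_wrt (<) (io_l ks ts) \<Longrightarrow> x \<notin> set (io_l ks ts) \<Longrightarrow>
     leafidx_l x ks ts = gi (concat (map sz ts)) (length (filter (\<lambda>y. y < x) (io_l ks ts)))"
proof (induction x t and x ks ts rule: leafidx_leafidx_l.induct)
  case (1 x ks ts)
  show ?case
  proof (cases "ts = []")
    case True
    have "length (filter (\<lambda>y. y < x) ks) \<le> length ks" by simp
    then show ?thesis using True by simp
  next
    case False
    then show ?thesis using 1 by auto
  qed
next
  case (2 x k ks t ts)
  have len: "length ts = Suc (length ks)" using "2.prems" by simp
  have wft: "wf t" "list_all wf ts" using "2.prems" by auto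
  note so = sorted_io_l_cons[OF "2.prems"(3)]
  have xnot: "x \<notin> set (io t)" "x \<noteq> k" "x \<notin> set (io_l ks ts)" using "2.prems"(4) by auto
  have sl: "Suc (length (io t)) = sum_list (map Suc (sz t))" using io_len(1)[OF wft(1)] .
  show ?case
  proof (cases "x < k")
    case True
    have "filter (\<lambda>y. y < x) (io_l (k # ks) (t # ts)) = filter (\<lambda>y. y < x) (io t)"
      using True so by (auto intro!: filter_False)
    moreover have "length (filter (\<lambda>y. y < x) (io t)) < sum_list (map Suc (sz t))"
      using sl by (metis length_filter_le less_Suc_eq_le)
    ultimately show ?thesis using "2.IH"(1)[OF True wft(1)] so xnot True
      by (simp add: gi_append1)
  next
    case False
    then have xk: "k < x" using xnot by auto
    have "filter (\<lambda>y. y < x) (io_l (k # ks) (t # ts)) = io t @ k # filter (\<lambda>y. y < x) (io_l ks ts)"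
      using xk so by (auto intro!: filter_True)
    then have r: "length (filter (\<lambda>y. y < x) (io_l (k # ks) (t # ts))) =
        sum_list (map Suc (sz t)) + length (filter (\<lambda>y. y < x) (io_l ks ts))"
      using sl by simp
    have IH2: "leafidx_l x ks ts = gi (concat (map sz ts)) (length (filter (\<lambda>y. y < x) (io_l ks ts)))"
      using "2.IH"(2)[OF False len wft(2)] so xnot by blast
    have g: "gi (sz t @ concat (map sz ts)) (sum_list (map Suc (sz t)) + length (filter (\<lambda>y. y < x) (io_l ks ts)))
       = length (sz t) + gi (concat (map sz ts)) (length (filter (\<lambda>y. y < x) (io_l ks ts)))"
      by (simp add: gi_append2)
    show ?thesis using False IH2 g
      by (simp only: r concat_map_cons_sz) (simp add: nleaves_sz)
  qed
next
  case (3 x t ts)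
  then show ?case by simp
qed auto

section \<open>leaf size list dynamics\<close>

lemma sum_upd: "i < length L \<Longrightarrow> sum_list (map Suc (upd m i L)) = Suc (sum_list (map Suc L))"
proof -
  assume i: "i < length L"
  have L: "L = take i L @ L ! i # drop (Suc i) L" using i by (simp add: id_take_nth_drop)
  have "sum_list (map Suc L) = sum_list (map Suc (take i L)) + Suc (L ! i) + sum_list (map Suc (drop (Suc i) L))"
    by (subst L) simp
  then show ?thesis by (simp add: upd_def)
qed

lemma length_upd: "i < length L \<Longrightarrow> length (upd m i L) = length L + (if L ! i = 2*m then 1 else 0)"
  by (simp add: upd_def)

fun valid :: "nat \<Rightarrow> nat list \<Rightarrow> nat list \<Rightarrow> bool" where
  "valid m L [] = True"
| "valid m L (i # is) = (i < length L \<and> valid m (upd m i L) is)"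

fun gprod :: "nat \<Rightarrow> nat list \<Rightarrow> nat list \<Rightarrow> nat" where
  "gprod m L [] = 1"
| "gprod m L (i # is) = Suc (L ! i) * gprod m (upd m i L) is"

lemma valid_snoc: "valid m L (is @ [i]) = (valid m L is \<and> i < length (fold (upd m) is L))"
  by (induction "is" arbitrary: L) auto

lemma gprod_snoc: "gprod m L (is @ [i]) = gprod m L is * Suc (fold (upd m) is L ! i)"
  by (induction "is" arbitrary: L) (auto simp: algebra_simps)

lemma sum_fold_upd: "valid m L is \<Longrightarrow> sum_list (map Suc (fold (upd m) is L)) = sum_list (map Suc L) + length is"
  by (induction "is" arbitrary: L) (auto simp: sum_upd)

section \<open>gap counting\<close>

lemma card_gi: "i < length L \<Longrightarrow> card {r. r < sum_list (map Suc L) \<and> gi L r = i} = Suc (L ! i)"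
proof (induction L arbitrary: i)
  case Nil then show ?case by simp
next
  case (Cons a L)
  show ?case
  proof (cases i)
    case 0
    have "{r. r < sum_list (map Suc (a # L)) \<and> gi (a # L) r = i} = {..a}"
      using 0 by auto
    then show ?thesis using 0 by simp
  next
    case (Suc i')
    then have i': "i' < length L" using Cons.prems by simp
    have "{r. r < sum_list (map Suc (a # L)) \<and> gi (a # L) r = i} =
          (\<lambda>r. r + Suc a) ` {r. r < sum_list (map Suc L) \<and> gi L r = i'}"
    proof (rule set_eqI, rule iffI)
      fix r assume "r \<in> {r. r < sum_list (map Suc (a # L)) \<and> gi (a # L) r = i}"
      then have "r < Suc a + sum_list (map Suc L)" "gi (a # L) r = Suc i'" using Suc by auto
      then have "a < r" "gi L (r - Suc a) = i'" by (auto split: if_splits)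
      then show "r \<in> (\<lambda>r. r + Suc a) ` {r. r < sum_list (map Suc L) \<and> gi L r = i'}"
        using \<open>r < Suc a + _\<close> by (intro image_eqI[of _ _ "r - Suc a"]) auto
    next
      fix r assume "r \<in> (\<lambda>r. r + Suc a) ` {r. r < sum_list (map Suc L) \<and> gi L r = i'}"
      then show "r \<in> {r. r < sum_list (map Suc (a # L)) \<and> gi (a # L) r = i}" using Suc by auto
    qed
    moreover have "inj (\<lambda>r::nat. r + Suc a)" by (auto intro: injI)
    ultimately show ?thesis using Cons.IH[OF i'] Suc
      by (simp add: card_image inj_on_def)
  qed
qed

definition rk :: "nat set \<Rightarrow> nat \<Rightarrow> nat" where
  "rk S x = card {y \<in> S. y < x}"

lemma card_rk:
  assumes "finite S"
  shows "card {x \<in> S. P (rk S x)} = card {r. r < card S \<and> P r}"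
proof -
  have inj: "inj_on (rk S) S"
  proof (rule inj_onI)
    fix x y assume xy: "x \<in> S" "y \<in> S" "rk S x = rk S y"
    show "x = y"
    proof (rule ccontr)
      assume "x \<noteq> y"
      then have "x < y \<or> y < x" by auto
      then show False
      proof
        assume "x < y"
        then have "{z \<in> S. z < x} \<subset> {z \<in> S. z < y}" using xy by auto
        then have "rk S x < rk S y" unfolding rk_def using assms by (intro psubset_card_mono) auto
        then show False using xy by simp
      next
        assume "y < x"
        then have "{z \<in> S. z < y} \<subset> {z \<in> S. z < x}" using xy by auto
        then have "rk S y < rk S x" unfolding rk_def using assms by (intro psubset_card_mono) auto
        then show False using xy by simp
      qed
    qed
  qed
  have sub: "rk S ` S \<subseteq> {..<card S}"
  proof
    fix r assume "r \<in> rk S ` S"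
    then obtain x where x: "x \<in> S" "r = rk S x" by auto
    have "{z \<in> S. z < x} \<subset> S" using x by auto
    then have "rk S x < card S" unfolding rk_def using assms by (intro psubset_card_mono) auto
    then show "r \<in> {..<card S}" using x by simp
  qed
  have img: "rk S ` S = {..<card S}"
    using card_image[OF inj] sub by (intro card_subset_eq) auto
  have "card {x \<in> S. P (rk S x)} = card (rk S ` {x \<in> S. P (rk S x)})"
    using inj by (intro card_image[symmetric]) (auto intro: inj_on_subset)
  also have "rk S ` {x \<in> S. P (rk S x)} = {r \<in> rk S ` S. P r}"
    by auto
  also have "\<dots> = {r. r < card S \<and> P r}"
    using img by auto
  finally show ?thesis .
qed



lemma insert_leaves_snoc:
  "insert_leaves m t (ys @ [x]) = insert_leaves m t ys @ [leafidx x (fold (btree_insert m) ys t)]"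
  by (induction ys arbitrary: t) auto

lemma length_insert_leaves: "length (insert_leaves m t ys) = length ys"
  by (induction ys arbitrary: t) auto

lemma strict_sorted_insort:
  "sorted_wrt (<) xs \<Longrightarrow> x \<notin> set xs \<Longrightarrow> sorted_wrt (<) (insort x xs)"
  by (simp add: strict_sorted_iff sorted_insort distinct_insort)

lemma state:
  "distinct (x0 # rest) \<Longrightarrow>
    wf (fold (btree_insert m) rest (BT [x0] [])) \<and>
    sorted_wrt (<) (io (fold (btree_insert m) rest (BT [x0] []))) \<and>
    set (io (fold (btree_insert m) rest (BT [x0] []))) = set (x0 # rest) \<and>
    sz (fold (btree_insert m) rest (BT [x0] [])) = fold (upd m) (insert_leaves m (BT [x0] []) rest) [1] \<and>
    valid m [1] (insert_leaves m (BT [x0] []) rest)"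
proof (induction rest rule: rev_induct)
  case Nil
  then show ?case by simp
next
  case (snoc x rest)
  define t where "t = fold (btree_insert m) rest (BT [x0] [])"
  have IH: "wf t" "sorted_wrt (<) (io t)" "set (io t) = set (x0 # rest)"
    "sz t = fold (upd m) (insert_leaves m (BT [x0] []) rest) [1]"
    "valid m [1] (insert_leaves m (BT [x0] []) rest)"
    using snoc by (auto simp: t_def)
  have xn: "x \<notin> set (io t)" using snoc.prems IH(3) by auto
  note bi = btree_insert_main[OF IH(1,2) xn, of m]
  have li: "leafidx x t < length (sz t)" using leafidx_lt(1)[OF IH(1)] .
  show ?case
    using bi IH xn li
    by (auto simp: t_def[symmetric] insert_leaves_snoc valid_snoc strict_sorted_insort set_insort_key)
qed

definition CS :: "nat \<Rightarrow> nat set \<Rightarrow> nat list \<Rightarrow> nat list set" where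
  "CS m S \<sigma> = {xs. distinct xs \<and> set xs = S \<and> xs \<noteq> [] \<and> insert_leaves m (BT [hd xs] []) (tl xs) = \<sigma>}"

lemma seq_snoc:
  assumes "ys \<noteq> []" "distinct ys" "x \<notin> set ys"
  shows "insert_leaves m (BT [hd (ys @ [x])] []) (tl (ys @ [x])) =
    insert_leaves m (BT [hd ys] []) (tl ys) @ [gi (fold (upd m) (insert_leaves m (BT [hd ys] []) (tl ys)) [1]) (rk (insert x (set ys)) x)]"
proof -
  obtain y0 rest where ys: "ys = y0 # rest" using assms(1) by (cases ys) auto
  define t where "t = fold (btree_insert m) rest (BT [y0] [])"
  have d: "distinct (y0 # rest)" using assms ys by simp
  note st = state[OF d, of m, folded t_def]
  have xn: "x \<notin> set (io t)" using st assms(3) ys by auto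
  have "leafidx x t = gi (sz t) (length (filter (\<lambda>y. y < x) (io t)))"
    using leafidx_gi(1)[of t x] st xn by blast
  also have "length (filter (\<lambda>y. y < x) (io t)) = card ({y. y < x} \<inter> set (io t))"
    using st by (intro distinct_length_filter) (simp add: strict_sorted_iff)
  also have "{y. y < x} \<inter> set (io t) = {y \<in> insert x (set ys). y < x}"
    using st ys by auto
  finally have "leafidx x t = gi (sz t) (rk (insert x (set ys)) x)" by (simp add: rk_def)
  then show ?thesis using st ys
    by (simp add: insert_leaves_snoc t_def)
qed

lemma finite_CS: "finite S \<Longrightarrow> finite (CS m S \<sigma>)"
proof -
  assume f: "finite S"
  have "CS m S \<sigma> \<subseteq> {xs. set xs \<subseteq> S \<and> length xs = card S}"
    unfolding CS_def using distinct_card by fastforce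
  then show ?thesis using finite_lists_length_eq[OF f] finite_subset by blast
qed

lemma count:
  "card S = Suc (length \<sigma>) \<Longrightarrow> valid m [1] \<sigma> \<Longrightarrow> card (CS m S \<sigma>) = gprod m [1] \<sigma>"
proof (induction \<sigma> arbitrary: S rule: rev_induct)
  case Nil
  then obtain a where S: "S = {a}" by (auto simp: card_Suc_eq)
  have "CS m S [] = {[a]}"
  proof (rule set_eqI, rule iffI)
    fix xs assume "xs \<in> CS m S []"
    then have "distinct xs" "set xs = {a}" by (auto simp: CS_def S)
    then have "length xs = 1" using distinct_card by fastforce
    then show "xs \<in> {[a]}" using \<open>set xs = {a}\<close> by (cases xs) auto
  qed (auto simp: CS_def S)
  then show ?case by simp
next
  case (snoc i \<sigma>)
  define L where "L = fold (upd m) \<sigma> [1]"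
  have val: "valid m [1] \<sigma>" "i < length L" using snoc.prems(2) by (auto simp: valid_snoc L_def)
  have cS: "card S = Suc (Suc (length \<sigma>))" using snoc.prems by simp
  then have fS: "finite S" by (metis card.infinite nat.distinct(1))
  define A where "A = {x \<in> S. gi L (rk S x) = i}"
  have eq: "CS m S (\<sigma> @ [i]) = (\<Union>x\<in>A. (\<lambda>ys. ys @ [x]) ` CS m (S - {x}) \<sigma>)"
  proof (rule set_eqI, rule iffI)
    fix xs assume xs: "xs \<in> CS m S (\<sigma> @ [i])"
    then have d: "distinct xs" "set xs = S" "xs \<noteq> []" by (auto simp: CS_def)
    have "length xs = card S" using d distinct_card by fastforce
    then have l2: "length xs \<ge> 2" using cS by simp
    then obtain ys x where xsy: "xs = ys @ [x]" by (cases xs rule: rev_exhaust) auto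
    have yne: "ys \<noteq> []" using l2 xsy by auto
    have dy: "distinct ys" "x \<notin> set ys" using d xsy by auto
    have Sx: "S = insert x (set ys)" using d xsy by auto
    note ss = seq_snoc[OF yne dy, of m]
    have sq: "insert_leaves m (BT [hd ys] []) (tl ys) = \<sigma>" and gi: "gi (fold (upd m) \<sigma> [1]) (rk S x) = i"
      using xs ss Sx by (auto simp: CS_def xsy)
    have "x \<in> A" using gi Sx by (auto simp: A_def L_def)
    moreover have "ys \<in> CS m (S - {x}) \<sigma>" using sq dy yne Sx by (auto simp: CS_def)
    ultimately show "xs \<in> (\<Union>x\<in>A. (\<lambda>ys. ys @ [x]) ` CS m (S - {x}) \<sigma>)" using xsy by blast
  next
    fix xs assume "xs \<in> (\<Union>x\<in>A. (\<lambda>ys. ys @ [x]) ` CS m (S - {x}) \<sigma>)"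
    then obtain x ys where x: "x \<in> A" and ys: "ys \<in> CS m (S - {x}) \<sigma>" and xsy: "xs = ys @ [x]" by blast
    have dy: "distinct ys" "x \<notin> set ys" "ys \<noteq> []" "set ys = S - {x}"
      and sq: "insert_leaves m (BT [hd ys] []) (tl ys) = \<sigma>" using ys by (auto simp: CS_def)
    have Sx: "S = insert x (set ys)" using dy x by (auto simp: A_def)
    note ss = seq_snoc[OF dy(3,1,2), of m]
    have g: "gi (fold (upd m) \<sigma> [1]) (rk (insert x (set ys)) x) = i"
      using x unfolding A_def L_def Sx by simp
    have "distinct (ys @ [x])" "set (ys @ [x]) = S" "ys @ [x] \<noteq> []" using dy(1,2) Sx by auto
    then show "xs \<in> CS m S (\<sigma> @ [i])"
      unfolding CS_def xsy using ss sq g by simp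
  qed
  have "card (CS m S (\<sigma> @ [i])) = (\<Sum>x\<in>A. card ((\<lambda>ys. ys @ [x]) ` CS m (S - {x}) \<sigma>))"
    unfolding eq
  proof (rule card_UN_disjoint)
    show "finite A" using fS by (simp add: A_def)
    show "\<forall>x\<in>A. finite ((\<lambda>ys. ys @ [x]) ` CS m (S - {x}) \<sigma>)" using fS finite_CS by auto
    show "\<forall>x\<in>A. \<forall>y\<in>A. x \<noteq> y \<longrightarrow> (\<lambda>ys. ys @ [x]) ` CS m (S - {x}) \<sigma> \<inter> (\<lambda>ys. ys @ [y]) ` CS m (S - {y}) \<sigma> = {}"
      by auto
  qed
  also have "\<dots> = (\<Sum>x\<in>A. gprod m [1] \<sigma>)"
  proof (rule sum.cong)
    fix x assume "x \<in> A"
    then have "x \<in> S" by (simp add: A_def)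
    then have "card (S - {x}) = Suc (length \<sigma>)" using cS fS by simp
    then have "card (CS m (S - {x}) \<sigma>) = gprod m [1] \<sigma>" using snoc.IH val(1) by blast
    moreover have "inj_on (\<lambda>ys. ys @ [x]) (CS m (S - {x}) \<sigma>)" by (auto intro: inj_onI)
    ultimately show "card ((\<lambda>ys. ys @ [x]) ` CS m (S - {x}) \<sigma>) = gprod m [1] \<sigma>" by (simp add: card_image)
  qed simp
  finally have c1: "card (CS m S (\<sigma> @ [i])) = card A * gprod m [1] \<sigma>" by simp
  have "card A = Suc (L ! i)"
  proof -
    have "card A = card {r. r < card S \<and> gi L r = i}" unfolding A_def by (rule card_rk[OF fS])
    also have "card S = sum_list (map Suc L)"
      using sum_fold_upd[OF val(1)] cS by (simp add: L_def)
    finally show ?thesis using card_gi[OF val(2)] by simp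
  qed
  then show ?case using c1 by (simp add: gprod_snoc L_def)
qed



lemma bh_ge: "branching_height m h \<Longrightarrow> 2*m \<le> h"
  by (auto simp: branching_height_def)

lemma bh_2m: "branching_height m (2*m)"
  unfolding branching_height_def by (rule exI[of _ 0]) simp

lemma bh_step:
  assumes "branching_height m x" "d \<le> m"
  shows "branching_height m (x + d + 1) \<longleftrightarrow> d = m"
proof
  assume "d = m"
  obtain j where j: "x = 2*m + j*(m+1)" using assms(1) by (auto simp: branching_height_def)
  have "x + d + 1 = 2*m + Suc j*(m+1)" using j \<open>d = m\<close> by simp
  then show "branching_height m (x + d + 1)" unfolding branching_height_def by blast
next
  assume b: "branching_height m (x + d + 1)"
  obtain j where j: "x = 2*m + j*(m+1)" using assms(1) by (auto simp: branching_height_def)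
  obtain j' where j': "x + d + 1 = 2*m + j'*(m+1)" using b by (auto simp: branching_height_def)
  have e: "j*(m+1) + (d+1) = j'*(m+1)" using j j' by simp
  show "d = m"
  proof (cases "j' \<le> j")
    case True
    then have "j'*(m+1) \<le> j*(m+1)" by (rule mult_right_mono) simp
    then show ?thesis using e by simp
  next
    case False
    then have "Suc j \<le> j'" by simp
    then have "Suc j*(m+1) \<le> j'*(m+1)" by (rule mult_right_mono) simp
    then show ?thesis using e assms(2) by simp
  qed
qed

definition Pinv :: "nat \<Rightarrow> nat \<Rightarrow> nat \<Rightarrow> bool \<Rightarrow> bool" where
  "Pinv m h c g = ((\<not> g \<and> c = h \<and> h \<le> 2*m) \<or> (g \<and> c \<le> m \<and> c < h \<and> branching_height m (h - Suc c)))"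

definition vval :: "nat \<Rightarrow> nat \<Rightarrow> bool \<Rightarrow> nat" where
  "vval m c g = (if g then m + c else c)"

lemma Pinv_bh: "Pinv m h c g \<Longrightarrow> branching_height m h \<longleftrightarrow> vval m c g = 2*m"
proof (cases g)
  case False
  assume "Pinv m h c g"
  then have "c = h" "h \<le> 2*m" using False by (auto simp: Pinv_def)
  then show ?thesis using False bh_ge[of m h] bh_2m[of m] by (auto simp: vval_def)
next
  case True
  assume "Pinv m h c g"
  then have c: "c \<le> m" "c < h" "branching_height m (h - Suc c)" using True by (auto simp: Pinv_def)
  have "h = (h - Suc c) + c + 1" using c by simp
  then have "branching_height m h \<longleftrightarrow> c = m" using bh_step[OF c(3) c(1)] by simp
  then show ?thesis using True by (auto simp: vval_def)
qed

lemma Pinv_step: "Pinv m h c g \<Longrightarrow>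
  Pinv m (Suc h) (if branching_height m h then 0 else Suc c) (g \<or> branching_height m h)"
proof -
  assume P: "Pinv m h c g"
  note pb = Pinv_bh[OF P]
  show ?thesis
  proof (cases "branching_height m h")
    case True
    then show ?thesis by (simp add: Pinv_def)
  next
    case False
    then show ?thesis using P pb bh_2m[of m]
      by (auto simp: Pinv_def vval_def le_less)
  qed
qed

fun lsz :: "nat \<Rightarrow> nat \<Rightarrow> nat \<Rightarrow> bool \<Rightarrow> htree \<Rightarrow> nat list" where
  "lsz m h c g Ext = [vval m c g]"
| "lsz m h c g (Vtx a ts) =
     concat (map (lsz m (Suc h) (if branching_height m h then 0 else Suc c) (g \<or> branching_height m h)) ts)"

lemma length_lsz: "length (lsz m h c g T) = nexts T"
proof (induction T arbitrary: h c g)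
  case Ext then show ?case by simp
next
  case (Vtx a ts)
  then show ?case by (simp add: length_concat comp_def cong: map_cong)
qed

lemma place_main:
  "Pinv m h c g \<Longrightarrow> i < nexts T \<Longrightarrow>
    lsz m h c g (place m h l i T) = upd m i (lsz m h c g T) \<and>
    branchings m h (place m h l i T) = branchings m h T + (if lsz m h c g T ! i = 2*m then 1 else 0)"
  "Pinv m h c g \<Longrightarrow> i < sum_list (map nexts ts) \<Longrightarrow>
    concat (map (lsz m h c g) (place_l m h l i ts)) = upd m i (concat (map (lsz m h c g) ts)) \<and>
    sum_list (map (branchings m h) (place_l m h l i ts)) = sum_list (map (branchings m h) ts) +
      (if concat (map (lsz m h c g) ts) ! i = 2*m then 1 else 0)"
proof (induction m h l i T and m h l i ts arbitrary: c g and c g rule: place_place_l.induct)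
  case (1 m h l i)
  then have i: "i = 0" by simp
  have pb: "branching_height m h \<longleftrightarrow> vval m c g = 2*m" using Pinv_bh[OF "1.prems"(1)] .
  show ?case
  proof (cases "branching_height m h")
    case True
    then show ?thesis using pb i
      by (simp add: new_vertex_def slots_def numeral_2_eq_2 upd_def vval_def)
  next
    case False
    then show ?thesis using pb i
      by (simp add: new_vertex_def slots_def upd_def vval_def)
  qed
next
  case (2 m h l i a ts)
  have P': "Pinv m (Suc h) (if branching_height m h then 0 else Suc c) (g \<or> branching_height m h)"
    using Pinv_step[OF "2.prems"(1)] .
  show ?case using "2.IH"[OF P'] "2.prems"(2) by simp
next
  case (3 m h l i)
  then show ?case by simp
next
  case (4 m h l i t ts)
  show ?case
  proof (cases "i < nexts t")
    case True
    have IH: "lsz m h c g (place m h l i t) = upd m i (lsz m h c g t) \<and>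
      branchings m h (place m h l i t) = branchings m h t + (if lsz m h c g t ! i = 2*m then 1 else 0)"
      using "4.IH"(1)[OF True "4.prems"(1) True] .
    have l: "i < length (lsz m h c g t)" using True length_lsz by simp
    show ?thesis using IH True l by (simp add: upd_append1 nth_append)
  next
    case False
    have i': "i - nexts t < sum_list (map nexts ts)" using False "4.prems"(2) by simp
    have IH: "concat (map (lsz m h c g) (place_l m h l (i - nexts t) ts)) = upd m (i - nexts t) (concat (map (lsz m h c g) ts)) \<and>
    sum_list (map (branchings m h) (place_l m h l (i - nexts t) ts)) = sum_list (map (branchings m h) ts) +
      (if concat (map (lsz m h c g) ts) ! (i - nexts t) = 2*m then 1 else 0)"
      using "4.IH"(2)[OF False "4.prems"(1) i'] .
    have l: "length (lsz m h c g t) = nexts t" using length_lsz by simp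
    show ?thesis using IH False l by (simp add: upd_append2 nth_append)
  qed
qed

definition ratio :: "nat \<Rightarrow> real" where
  "ratio m = fact (2*m+1) / (fact m)^2"

definition F :: "nat \<Rightarrow> htree \<Rightarrow> real" where
  "F m T = ratio m ^ branchings m 0 T * prod_list (map (\<lambda>s. fact s) (lsz m 0 0 False T))"

lemma F_place:
  assumes "i < nexts T"
  shows "F m (place m 0 l i T) = F m T * real (Suc (lsz m 0 0 False T ! i))"
proof -
  have P: "Pinv m 0 0 False" by (simp add: Pinv_def)
  note pm = place_main(1)[OF P assms, of l]
  define L where "L = lsz m 0 0 False T"
  define v where "v = L ! i"
  have iL: "i < length L" using assms length_lsz by (simp add: L_def)
  define A :: real where "A = prod_list (map (\<lambda>s. fact s) (take i L))"
  define B :: real where "B = prod_list (map (\<lambda>s. fact s) (drop (Suc i) L))"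
  have pL: "prod_list (map (\<lambda>s. fact s :: real) L) = A * fact v * B"
  proof -
    have "L = take i L @ v # drop (Suc i) L" using iL by (simp add: v_def id_take_nth_drop)
    then have "prod_list (map (\<lambda>s. fact s :: real) L) = prod_list (map (\<lambda>s. fact s :: real) (take i L @ v # drop (Suc i) L))"
      by simp
    then show ?thesis by (simp add: A_def B_def)
  qed
  show ?thesis
  proof (cases "v = 2*m")
    case True
    have pU: "prod_list (map (\<lambda>s. fact s :: real) (upd m i L)) = A * (fact m * fact m) * B"
      using True by (simp add: upd_def A_def B_def v_def[symmetric])
    have r: "ratio m * (fact m * fact m) = (2 * real m + 1) * fact (2*m)"
      by (simp add: ratio_def power2_eq_square)
    have "F m (place m 0 l i T) = ratio m ^ Suc (branchings m 0 T) * (A * (fact m * fact m) * B)"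
      using pm True pU by (simp add: F_def L_def[symmetric] v_def[symmetric])
    also have "\<dots> = ratio m ^ branchings m 0 T * A * B * (ratio m * (fact m * fact m))" by (simp add: algebra_simps)
    also have "\<dots> = ratio m ^ branchings m 0 T * (A * fact v * B) * real (Suc v)"
      unfolding r using True by (simp add: algebra_simps)
    finally show ?thesis using pL by (simp add: F_def L_def[symmetric] v_def[symmetric])
  next
    case False
    have pU: "prod_list (map (\<lambda>s. fact s :: real) (upd m i L)) = A * fact (Suc v) * B"
      using False by (simp add: upd_def A_def B_def v_def[symmetric])
    have "F m (place m 0 l i T) = ratio m ^ branchings m 0 T * (A * fact (Suc v) * B)"
      using pm False pU by (simp add: F_def L_def[symmetric] v_def[symmetric])
    also have "\<dots> = ratio m ^ branchings m 0 T * (A * fact v * B) * real (Suc v)"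
      by (simp add: algebra_simps)
    finally show ?thesis using pL by (simp add: F_def L_def[symmetric] v_def[symmetric])
  qed
qed

lemma build_snoc: "build m k T (\<sigma> @ [i]) = place m 0 (k + length \<sigma>) i (build m k T \<sigma>)"
  by (induction \<sigma> arbitrary: k T) auto

lemma T0_eq: "m \<ge> 1 \<Longrightarrow> new_vertex m 0 (Suc 0) = Vtx (Suc 0) [Ext]"
  by (auto simp: new_vertex_def slots_def branching_height_def)

lemma build_main:
  assumes "m \<ge> 1"
  shows "valid m [1] \<sigma> \<Longrightarrow> lsz m 0 0 False (build m 2 (new_vertex m 0 1) \<sigma>) = fold (upd m) \<sigma> [1] \<and>
    F m (build m 2 (new_vertex m 0 1) \<sigma>) = real (gprod m [1] \<sigma>)"
proof (induction \<sigma> rule: rev_induct)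
  case Nil
  have "\<not> branching_height m 0" using assms by (auto simp: branching_height_def)
  then show ?case using assms by (simp add: T0_eq F_def vval_def)
next
  case (snoc i \<sigma>)
  have v: "valid m [1] \<sigma>" "i < length (fold (upd m) \<sigma> [1])" using snoc.prems by (auto simp: valid_snoc)
  note IH = snoc.IH[OF v(1)]
  define B where "B = build m 2 (new_vertex m 0 1) \<sigma>"
  have iB: "i < nexts B" using v(2) IH length_lsz[of m 0 0 False B] by (simp add: B_def)
  have P: "Pinv m 0 0 False" by (simp add: Pinv_def)
  note pm = place_main(1)[OF P iB, of "2 + length \<sigma>"]
  have bs: "build m 2 (new_vertex m 0 1) (\<sigma> @ [i]) = place m 0 (2 + length \<sigma>) i B"
    by (simp add: build_snoc B_def)
  have IH': "lsz m 0 0 False B = fold (upd m) \<sigma> [1]" "F m B = real (gprod m [1] \<sigma>)"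
    using IH by (simp_all add: B_def)
  have "F m (place m 0 (2 + length \<sigma>) i B) = real (gprod m [1] (\<sigma> @ [i]))"
    using F_place[OF iB, of m "2 + length \<sigma>"] IH' by (simp add: gprod_snoc algebra_simps)
  then show ?case unfolding bs using pm IH' by simp
qed



lemma labels_place_sub:
  "set (labels (place m h l i T)) \<subseteq> insert l (set (labels T))"
  "set (concat (map labels (place_l m h l i ts))) \<subseteq> insert l (set (concat (map labels ts)))"
  by (induction m h l i T and m h l i ts rule: place_place_l.induct)
     (auto simp: new_vertex_def)

lemma mset_labels_place:
  "i < nexts T \<Longrightarrow> mset (labels (place m h l i T)) = add_mset l (mset (labels T))"
  "i < sum_list (map nexts ts) \<Longrightarrow> mset (concat (map labels (place_l m h l i ts))) = add_mset l (mset (concat (map labels ts)))"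
  by (induction m h l i T and m h l i ts rule: place_place_l.induct)
     (auto simp: new_vertex_def)

fun del :: "nat \<Rightarrow> htree \<Rightarrow> htree" where
  "del l Ext = Ext"
| "del l (Vtx a ts) = (if a = l then Ext else Vtx a (map (del l) ts))"

lemma del_nolabel: "l \<notin> set (labels T) \<Longrightarrow> del l T = T"
  by (induction T) (auto intro: map_idI)

lemma del_place:
  "l \<notin> set (labels T) \<Longrightarrow> del l (place m h l i T) = T"
  "l \<notin> set (concat (map labels ts)) \<Longrightarrow> map (del l) (place_l m h l i ts) = ts"
  by (induction m h l i T and m h l i ts rule: place_place_l.induct)
     (auto simp: new_vertex_def del_nolabel intro: map_idI)

lemma l_notin_del: "l \<notin> set (labels (del l T))"
  by (induction T) auto

lemma place_inj:
  "i < nexts T \<Longrightarrow> j < nexts T \<Longrightarrow> l \<notin> set (labels T) \<Longrightarrow> place m h l i T = place m h l j T \<Longrightarrow> i = j"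
  "i < sum_list (map nexts ts) \<Longrightarrow> j < sum_list (map nexts ts) \<Longrightarrow> l \<notin> set (concat (map labels ts)) \<Longrightarrow>
     place_l m h l i ts = place_l m h l j ts \<Longrightarrow> i = j"
proof (induction m h l i T and m h l i ts arbitrary: j and j rule: place_place_l.induct)
  case (4 m h l i t ts)
  have lin: "\<And>k. k < nexts t \<Longrightarrow> l \<in> set (labels (place m h l k t))"
    using mset_labels_place(1) by (metis mset_eq_setD set_mset_add_mset_insert insertI1 set_mset_mset)
  show ?case
  proof (cases "i < nexts t")
    case True
    show ?thesis
    proof (cases "j < nexts t")
      case True
      then show ?thesis using "4.IH"(1)[OF \<open>i < nexts t\<close> \<open>i < nexts t\<close> True] "4.prems" \<open>i < nexts t\<close> by simp
    next
      case False
      then have "place m h l i t = t" using "4.prems"(4) \<open>i < nexts t\<close> by simp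
      then show ?thesis using lin[OF \<open>i < nexts t\<close>] "4.prems"(3) by simp
    qed
  next
    case False
    show ?thesis
    proof (cases "j < nexts t")
      case True
      then have "place m h l j t = t" using "4.prems"(4) False by simp
      then show ?thesis using lin[OF True] "4.prems"(3) by simp
    next
      case False2: False
      have "i - nexts t = j - nexts t"
        using "4.IH"(2)[OF False, of "j - nexts t"] "4.prems" False False2 by simp
      then show ?thesis using False False2 by simp
    qed
  qed
qed auto

lemma root_del: "root_label (del l t) = None \<or> root_label (del l t) = root_label t"
  by (cases t) auto

lemma hwf_del: "hwf m h T \<Longrightarrow> hwf m h (del l T)"
proof (induction T arbitrary: h)
  case Ext then show ?case by simp
next
  case (Vtx a ts)
  show ?case
  proof (cases "a = l")
    case True then show ?thesis by simp
  next
    case False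
    have "list_all (\<lambda>t. hwf m (Suc h) t \<and> (case root_label t of None \<Rightarrow> True | Some b \<Rightarrow> a < b)) (map (del l) ts)"
      unfolding list_all_iff
    proof
      fix t' assume "t' \<in> set (map (del l) ts)"
      then obtain t where t: "t \<in> set ts" "t' = del l t" by auto
      have h: "hwf m (Suc h) t" "case root_label t of None \<Rightarrow> True | Some b \<Rightarrow> a < b"
        using Vtx.prems t(1) by (auto simp: list_all_iff)
      have "hwf m (Suc h) (del l t)" using Vtx.IH[OF t(1) h(1)] .
      moreover have "case root_label (del l t) of None \<Rightarrow> True | Some b \<Rightarrow> a < b"
        using root_del[of l t] h(2) by auto
      ultimately show "hwf m (Suc h) t' \<and> (case root_label t' of None \<Rightarrow> True | Some b \<Rightarrow> a < b)"
        using t by simp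
    qed
    then show ?thesis using Vtx.prems False by simp
  qed
qed

lemma labels_nil: "labels T = [] \<longleftrightarrow> T = Ext"
  by (cases T) auto

lemma ex_place:
  "hwf m h T \<Longrightarrow> distinct (labels T) \<Longrightarrow> l \<in> set (labels T) \<Longrightarrow> \<forall>x\<in>set (labels T). x \<le> l \<Longrightarrow>
    \<exists>i < nexts (del l T). place m h l i (del l T) = T"
proof (induction T arbitrary: h)
  case Ext then show ?case by simp
next
  case (Vtx a ts)
  show ?case
  proof (cases "a = l")
    case True
    have "\<forall>t\<in>set ts. t = Ext"
    proof
      fix t assume t: "t \<in> set ts"
      show "t = Ext"
      proof (cases t)
        case (Vtx b us)
        have "a < b" using Vtx.prems(1) t Vtx by (auto simp: list_all_iff)
        moreover have "b \<in> set (labels (Vtx a ts))"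
        proof -
          have "b \<in> set (labels t)" using Vtx by simp
          then show ?thesis using t by auto
        qed
        ultimately show ?thesis using Vtx.prems(4) True by fastforce
      qed
    qed
    moreover have "length ts = slots m h" using Vtx.prems(1) by simp
    ultimately have "ts = replicate (slots m h) Ext" by (simp add: list_eq_iff_nth_eq)
    then show ?thesis using True by (simp add: new_vertex_def)
  next
    case False
    have "\<forall>ts'. set ts' \<subseteq> set ts \<longrightarrow> distinct (concat (map labels ts')) \<longrightarrow> l \<in> set (concat (map labels ts')) \<longrightarrow>
       (\<exists>i < sum_list (map nexts (map (del l) ts')). place_l m (Suc h) l i (map (del l) ts') = ts')"
    proof (intro allI)
      fix ts' show "set ts' \<subseteq> set ts \<longrightarrow> distinct (concat (map labels ts')) \<longrightarrow> l \<in> set (concat (map labels ts')) \<longrightarrow>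
       (\<exists>i < sum_list (map nexts (map (del l) ts')). place_l m (Suc h) l i (map (del l) ts') = ts')"
      proof (induction ts')
        case Nil then show ?case by simp
      next
        case (Cons t ts')
        show ?case
        proof (intro impI)
          assume s: "set (t # ts') \<subseteq> set ts" and d: "distinct (concat (map labels (t # ts')))"
            and lin: "l \<in> set (concat (map labels (t # ts')))"
          have tts: "t \<in> set ts" using s by simp
          show "\<exists>i < sum_list (map nexts (map (del l) (t # ts'))). place_l m (Suc h) l i (map (del l) (t # ts')) = t # ts'"
          proof (cases "l \<in> set (labels t)")
            case True
            have hw: "hwf m (Suc h) t" using Vtx.prems(1) tts by (auto simp: list_all_iff)
            have dt: "distinct (labels t)" using d by simp
            have le: "\<forall>x\<in>set (labels t). x \<le> l" using Vtx.prems(4) tts by auto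
            obtain i where i: "i < nexts (del l t)" "place m (Suc h) l i (del l t) = t"
              using Vtx.IH[OF tts hw dt True le] by blast
            have nl: "l \<notin> set (concat (map labels ts'))" using d True by auto
            then have "map (del l) ts' = ts'" by (auto intro!: map_idI del_nolabel)
            then show ?thesis using i by (intro exI[of _ i]) simp
          next
            case False
            have dt: "del l t = t" using False by (rule del_nolabel)
            obtain i where i: "i < sum_list (map nexts (map (del l) ts'))" "place_l m (Suc h) l i (map (del l) ts') = ts'"
              using Cons.IH s d lin False by auto
            show ?thesis using i dt by (intro exI[of _ "nexts t + i"]) simp
          qed
        qed
      qed
    qed
    moreover have "distinct (concat (map labels ts))" "l \<in> set (concat (map labels ts))"
      using Vtx.prems(2,3) False by auto
    ultimately obtain i where "i < sum_list (map nexts (map (del l) ts))" "place_l m (Suc h) l i (map (del l) ts) = ts"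
      by blast
    then show ?thesis using False by (intro exI[of _ i]) simp
  qed
qed

lemma labels_build: "set (labels (build m k T \<sigma>)) \<subseteq> set (labels T) \<union> {k..<k + length \<sigma>}"
proof (induction \<sigma> arbitrary: k T)
  case Nil then show ?case by simp
next
  case (Cons i \<sigma>)
  show ?case
  proof
    fix x assume "x \<in> set (labels (build m k T (i # \<sigma>)))"
    then have "x \<in> set (labels (place m 0 k i T)) \<union> {Suc k..<Suc k + length \<sigma>}"
      using Cons.IH[of "Suc k" "place m 0 k i T"] by auto
    then show "x \<in> set (labels T) \<union> {k..<k + length (i # \<sigma>)}"
      using labels_place_sub(1)[of m 0 k i T] by auto
  qed
qed

abbreviation T0 :: "nat \<Rightarrow> htree" where "T0 m \<equiv> new_vertex m 0 1"

lemma valid_nexts: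
  assumes "m \<ge> 1" "valid m [1] (\<sigma> @ [i])"
  shows "i < nexts (build m 2 (T0 m) \<sigma>)"
proof -
  have "valid m [1] \<sigma>" "i < length (fold (upd m) \<sigma> [1])" using assms(2) by (auto simp: valid_snoc)
  then show ?thesis using build_main[OF assms(1)] length_lsz by metis
qed

lemma uniq_sigma:
  assumes m: "m \<ge> 1"
  shows "valid m [1] \<sigma> \<Longrightarrow> valid m [1] \<sigma>' \<Longrightarrow> length \<sigma> = length \<sigma>' \<Longrightarrow>
    build m 2 (T0 m) \<sigma> = build m 2 (T0 m) \<sigma>' \<Longrightarrow> \<sigma> = \<sigma>'"
proof (induction \<sigma> arbitrary: \<sigma>' rule: rev_induct)
  case Nil then show ?case by simp
next
  case (snoc i \<sigma>)
  obtain \<sigma>'' j where s': "\<sigma>' = \<sigma>'' @ [j]" using snoc.prems(3) by (cases \<sigma>' rule: rev_exhaust) auto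
  have len: "length \<sigma> = length \<sigma>''" using snoc.prems(3) s' by simp
  have v: "valid m [1] \<sigma>" "valid m [1] \<sigma>''" using snoc.prems(1,2) s' by (auto simp: valid_snoc)
  have T0l: "labels (T0 m) = [1]" using m by (simp add: new_vertex_def slots_def branching_height_def)
  have nl1: "2 + length \<sigma> \<notin> set (labels (build m 2 (T0 m) \<sigma>))"
    using labels_build[of m 2 "T0 m" \<sigma>] T0l by auto
  have nl2: "2 + length \<sigma> \<notin> set (labels (build m 2 (T0 m) \<sigma>''))"
    using labels_build[of m 2 "T0 m" \<sigma>''] T0l len by auto
  have eq: "place m 0 (2 + length \<sigma>) i (build m 2 (T0 m) \<sigma>) = place m 0 (2 + length \<sigma>) j (build m 2 (T0 m) \<sigma>'')"
    using snoc.prems(4) s' len by (simp add: build_snoc)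
  have "build m 2 (T0 m) \<sigma> = build m 2 (T0 m) \<sigma>''"
    using arg_cong[OF eq, of "del (2 + length \<sigma>)"] del_place(1)[OF nl1] del_place(1)[OF nl2] by simp
  then have "\<sigma> = \<sigma>''" using snoc.IH[OF v(1) v(2) len] by simp
  moreover have "i = j"
  proof -
    have "i < nexts (build m 2 (T0 m) \<sigma>)" using valid_nexts[OF m snoc.prems(1)] .
    moreover have "j < nexts (build m 2 (T0 m) \<sigma>)" using valid_nexts[OF m, of \<sigma>'' j] snoc.prems(2) s' \<open>\<sigma> = \<sigma>''\<close> by simp
    ultimately show ?thesis using place_inj(1)[OF _ _ nl1] eq \<open>\<sigma> = \<sigma>''\<close> by blast
  qed
  ultimately show ?case using s' by simp
qed



lemma lsz_true: "lsz m h c True T = map (\<lambda>s. m + s) (ext_gaps m h c T)"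
  by (induction T arbitrary: h c) (auto simp: vval_def map_concat comp_def cong: map_cong)

lemma lsz_false:
  "hwf m h T \<Longrightarrow> h \<le> 2*m \<Longrightarrow> 1 \<le> branchings m h T \<Longrightarrow>
    lsz m h c False T = map (\<lambda>s. m + s) (ext_gaps m h c' T)"
proof (induction T arbitrary: h c c')
  case Ext then show ?case by simp
next
  case (Vtx a ts)
  show ?case
  proof (cases "branching_height m h")
    case True
    have e: "lsz m (Suc h) 0 True = (\<lambda>T. map ((+) m) (ext_gaps m (Suc h) 0 T))"
      by (rule ext) (simp add: lsz_true)
    show ?thesis using True by (simp add: e map_concat comp_def)
  next
    case False
    then have h: "h < 2*m" using Vtx.prems(2) bh_2m[of m] le_less by auto
    then have "slots m h = 1" using False by (simp add: slots_def)
    then obtain t where ts: "ts = [t]" using Vtx.prems(1) by (cases ts) auto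
    have "hwf m (Suc h) t" using Vtx.prems(1) ts by simp
    moreover have "1 \<le> branchings m (Suc h) t" using Vtx.prems(3) ts False by simp
    ultimately show ?thesis using Vtx.IH[of t "Suc h"] ts False h by simp
  qed
qed

lemma ex_sigma:
  assumes m: "m \<ge> 1"
  shows "hwf m 0 H \<Longrightarrow> distinct (labels H) \<Longrightarrow> set (labels H) = {1..n} \<Longrightarrow> H \<noteq> Ext \<Longrightarrow>
    \<exists>\<sigma>. length \<sigma> = n - 1 \<and> valid m [1] \<sigma> \<and> build m 2 (T0 m) \<sigma> = H"
proof (induction n arbitrary: H)
  case 0
  then show ?case by (cases H) auto
next
  case (Suc n)
  show ?case
  proof (cases "n = 0")
    case True
    obtain a ts where H: "H = Vtx a ts" using Suc.prems(4) by (cases H) auto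
    have "set (labels H) = {1}" using Suc.prems(3) True by simp
    then have a: "a = 1" and r: "set (concat (map labels ts)) \<subseteq> {1}" using H by auto
    have "1 \<notin> set (concat (map labels ts))" using Suc.prems(2) H a by simp
    have "\<forall>t\<in>set ts. labels t = []"
    proof
      fix t assume t: "t \<in> set ts"
      then have "set (labels t) \<subseteq> set (concat (map labels ts))" by auto
      have "\<forall>x. x \<in> set (labels t) \<longrightarrow> False"
      proof (intro allI impI)
        fix x assume x: "x \<in> set (labels t)"
        then have x2: "x \<in> set (concat (map labels ts))" using t by auto
        then have "x = 1" using r by blast
        then show False using x2 \<open>1 \<notin> set (concat (map labels ts))\<close> by simp
      qed
      then show "labels t = []" by (cases "labels t") auto
    qed
    then have "\<forall>t\<in>set ts. t = Ext" by (simp add: labels_nil)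
    moreover have "length ts = 1"
    proof -
      have nb: "\<not> branching_height m 0" using m by (auto simp: branching_height_def)
      then show ?thesis using Suc.prems(1) H by (simp add: slots_def)
    qed
    ultimately have "ts = [Ext]" by (cases ts) auto
    then have "H = T0 m" using H a m by (simp add: T0_eq)
    then show ?thesis using True by (intro exI[of _ "[]"]) simp
  next
    case False
    define N where "N = Suc n"
    have Nl: "N \<in> set (labels H)" "\<forall>x\<in>set (labels H). x \<le> N" using Suc.prems(3) by (auto simp: N_def)
    obtain i where i: "i < nexts (del N H)" and pl: "place m 0 N i (del N H) = H"
      using ex_place[OF Suc.prems(1,2) Nl] by blast
    define H' where "H' = del N H"
    have ms: "mset (labels H) = add_mset N (mset (labels H'))"
      using mset_labels_place(1)[OF i, of m 0 N] pl by (simp add: H'_def)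
    have nN: "N \<notin> set (labels H')" unfolding H'_def by (rule l_notin_del)
    have sH: "set (labels H) = insert N (set (labels H'))"
      using arg_cong[OF ms, of set_mset] by simp
    have "set (labels H') = {1..Suc n} - {Suc n}"
      using sH nN Suc.prems(3) unfolding N_def by auto
    moreover have "{1..Suc n} - {Suc n} = {1..n}" by (simp add: atLeastAtMostSuc_conv)
    ultimately have sH': "set (labels H') = {1..n}" by simp
    have dH': "distinct (labels H')"
    proof -
      have "mset (labels H) = mset (N # labels H')" using ms by simp
      then have "distinct (N # labels H')" using Suc.prems(2) mset_eq_imp_distinct_iff by blast
      then show ?thesis by simp
    qed
    have hH': "hwf m 0 H'" unfolding H'_def by (rule hwf_del[OF Suc.prems(1)])
    have neH': "H' \<noteq> Ext"
    proof
      assume "H' = Ext"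
      then have "set (labels H') = {}" by simp
      then show False using sH' False by auto
    qed
    obtain \<sigma> where \<sigma>: "length \<sigma> = n - 1" "valid m [1] \<sigma>" "build m 2 (T0 m) \<sigma> = H'"
      using Suc.IH[OF hH' dH' sH' neH'] by blast
    have "length (fold (upd m) \<sigma> [1]) = nexts H'"
      using build_main[OF m \<sigma>(2)] \<sigma>(3) length_lsz by metis
    then have v: "valid m [1] (\<sigma> @ [i])" using \<sigma>(2) i by (simp add: valid_snoc H'_def)
    have "build m 2 (T0 m) (\<sigma> @ [i]) = place m 0 N i H'"
      using \<sigma> False by (simp add: build_snoc N_def)
    then have "build m 2 (T0 m) (\<sigma> @ [i]) = H" using pl by (simp add: H'_def)
    then show ?thesis using v \<sigma>(1) False by (intro exI[of _ "\<sigma> @ [i]"]) simp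
  qed
qed

lemma perm_card:
  "card {p. p permutes {1..n} \<and> Q (map p [1..<Suc n])} = card {xs. distinct xs \<and> set xs = {1..n} \<and> Q xs}"
proof -
  define f where "f = (\<lambda>p::nat \<Rightarrow> nat. map p [1..<Suc n])"
  have inj: "inj_on f {p. p permutes {1..n} \<and> Q (map p [1..<Suc n])}"
  proof (rule inj_onI)
    fix p q assume p: "p \<in> {p. p permutes {1..n} \<and> Q (map p [1..<Suc n])}"
      and q: "q \<in> {p. p permutes {1..n} \<and> Q (map p [1..<Suc n])}" and e: "f p = f q"
    have "\<forall>x\<in>{1..n}. p x = q x" using e by (auto simp: f_def map_eq_conv)
    moreover have "\<forall>x. x \<notin> {1..n} \<longrightarrow> p x = q x" using p q by (auto simp: permutes_not_in)
    ultimately show "p = q" by blast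
  qed
  have img: "f ` {p. p permutes {1..n} \<and> Q (map p [1..<Suc n])} = {xs. distinct xs \<and> set xs = {1..n} \<and> Q xs}"
  proof (rule set_eqI, rule iffI)
    fix xs assume "xs \<in> f ` {p. p permutes {1..n} \<and> Q (map p [1..<Suc n])}"
    then obtain p where p: "p permutes {1..n}" "Q (map p [1..<Suc n])" "xs = map p [1..<Suc n]" by (auto simp: f_def)
    have "distinct xs" using p by (simp add: distinct_map permutes_inj_on)
    moreover have "set xs = {1..n}"
    proof -
      have "set [1..<Suc n] = {1..n}" by auto
      then have "set xs = p ` {1..n}" using p(3) by simp
      then show ?thesis using permutes_image[OF p(1)] by simp
    qed
    ultimately show "xs \<in> {xs. distinct xs \<and> set xs = {1..n} \<and> Q xs}" using p by simp
  next
    fix xs assume xs: "xs \<in> {xs. distinct xs \<and> set xs = {1..n} \<and> Q xs}"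
    then have d: "distinct xs" "set xs = {1..n}" "Q xs" by auto
    have len: "length xs = n" using distinct_card[OF d(1)] d(2) by simp
    define p where "p = (\<lambda>i. if i \<in> {1..n} then xs ! (i - 1) else i)"
    have mp: "map p [1..<Suc n] = xs"
      by (rule nth_equalityI) (auto simp: len p_def simp del: upt_Suc)
    have im: "p ` {1..n} = set xs"
    proof (rule set_eqI, rule iffI)
      fix y assume "y \<in> p ` {1..n}"
      then obtain i where "i \<in> {1..n}" "y = xs ! (i - 1)" by (auto simp: p_def)
      then show "y \<in> set xs" using len by auto
    next
      fix y assume "y \<in> set xs"
      then obtain j where j: "j < n" "y = xs ! j" using len by (auto simp: in_set_conv_nth)
      then have "y = p (Suc j)" by (simp add: p_def)
      then show "y \<in> p ` {1..n}" using j by auto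
    qed
    have cc: "card (p ` {1..n}) = card {1..n}" unfolding im d(2) by (rule refl)
    have "inj_on p {1..n}"
      by (rule eq_card_imp_inj_on[OF finite_atLeastAtMost cc])
    then have "bij_betw p {1..n} {1..n}" using im d(2) by (simp add: bij_betw_def)
    moreover have "\<And>x. x \<notin> {1..n} \<Longrightarrow> p x = x" unfolding p_def by (simp only: if_False)
    ultimately have "p permutes {1..n}" by (rule bij_imp_permutes)
    then show "xs \<in> f ` {p. p permutes {1..n} \<and> Q (map p [1..<Suc n])}"
      using mp d(3) by (auto simp: f_def intro!: image_eqI[of _ _ p])
  qed
  show ?thesis using card_image[OF inj] img by simp
qed



theorem proposition1p3:
  fixes m n :: nat and H :: htree
  assumes "m \<ge> 1"
    and "historic m n H"
    and "branchings m 0 H \<ge> 1"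
  shows "real (card {p. p permutes {1..n} \<and> Phi_keys m (map p [1..<Suc n]) = H})
         = (fact (2*m+1) / (fact m)^2) ^ (branchings m 0 H)
           * (\<Prod>s\<leftarrow>ext_gaps m 0 0 H. fact (m + s))"
proof -
  note m = assms(1)
  have H: "H \<noteq> Ext" "hwf m 0 H" "distinct (labels H)" "set (labels H) = {1..n}"
    using assms(2) by (auto simp: historic_def)
  have "labels H \<noteq> []" using H(1) labels_nil by blast
  then have "{1..n} \<noteq> ({}::nat set)" using H(4) by (metis set_empty)
  then have n1: "n \<ge> 1" by simp
  obtain \<sigma>0 where s0: "length \<sigma>0 = n - 1" "valid m [1] \<sigma>0" "build m 2 (T0 m) \<sigma>0 = H"
    using ex_sigma[OF m H(2,3,4,1)] by blast
  have eqset: "{xs. distinct xs \<and> set xs = {1..n} \<and> Phi_keys m xs = H} = CS m {1..n} \<sigma>0"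
  proof (rule set_eqI, rule iffI)
    fix xs assume xs: "xs \<in> {xs. distinct xs \<and> set xs = {1..n} \<and> Phi_keys m xs = H}"
    then have d: "distinct xs" "set xs = {1..n}" "Phi_keys m xs = H" by auto
    have len: "length xs = n" using distinct_card[OF d(1)] d(2) by simp
    then obtain x0 rest where xr: "xs = x0 # rest" using n1 by (cases xs) auto
    note st = state[of x0 rest m]
    have v: "valid m [1] (insert_leaves m (BT [x0] []) rest)" using st d(1) xr by blast
    have l: "length (insert_leaves m (BT [x0] []) rest) = length \<sigma>0"
      using len xr s0(1) by (simp add: length_insert_leaves)
    have b: "build m 2 (T0 m) (insert_leaves m (BT [x0] []) rest) = build m 2 (T0 m) \<sigma>0"
      using d(3) s0(3) xr by simp
    have "insert_leaves m (BT [x0] []) rest = \<sigma>0" using uniq_sigma[OF m v s0(2) l b] .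
    then show "xs \<in> CS m {1..n} \<sigma>0" using d xr by (simp add: CS_def)
  next
    fix xs assume "xs \<in> CS m {1..n} \<sigma>0"
    then have d: "distinct xs" "set xs = {1..n}" "xs \<noteq> []" "insert_leaves m (BT [hd xs] []) (tl xs) = \<sigma>0"
      by (auto simp: CS_def)
    then obtain x0 rest where xr: "xs = x0 # rest" by (cases xs) auto
    have "Phi_keys m xs = H" using d(4) s0(3) xr by simp
    then show "xs \<in> {xs. distinct xs \<and> set xs = {1..n} \<and> Phi_keys m xs = H}" using d by simp
  qed
  have "card {p. p permutes {1..n} \<and> Phi_keys m (map p [1..<Suc n]) = H}
      = card {xs. distinct xs \<and> set xs = {1..n} \<and> Phi_keys m xs = H}"
    by (rule perm_card)
  also have "\<dots> = gprod m [1] \<sigma>0"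
    unfolding eqset using count[of "{1..n}" \<sigma>0 m] s0 n1 by simp
  finally have c: "real (card {p. p permutes {1..n} \<and> Phi_keys m (map p [1..<Suc n]) = H}) = F m H"
    using build_main[OF m s0(2)] s0(3) by simp
  have ls: "lsz m 0 0 False H = map (\<lambda>s. m + s) (ext_gaps m 0 0 H)"
    using lsz_false[OF H(2) _ assms(3)] by simp
  show ?thesis unfolding c F_def ratio_def ls by (simp add: comp_def)
qed


end
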